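(* Consider four qubits labelled $\alpha,\beta,1,2$ with Hamiltonian $$H=\frac{h_\alpha}{2}(X_\alpha X_\beta+Y_\alpha Y_\beta)+\frac{h_\beta}{2}(X_\beta X_1+Y_\beta Y_1)+\frac{h_1}{2}(X_1X_2+Y_1Y_2),$$ initial state $\rho_0=\frac I2\otimes\frac{I+X}{2}\otimes\frac I2\otimes\frac I2$ (qubit $\beta$ in the $+1$ eigenstate of $X$, all other qubits maximally mixed), and output $y_h(t)=\operatorname{Tr}\big(Y_\alpha Z_\beta\,e^{-\mathrm{i}Ht}\rho_0e^{\mathrm{i}Ht}\big)$, $t\ge0$, where $h=(h_\alpha,h_\beta,h_1)\in\mathbb{R}^3$. Then for almost every pair $h,h'\in\mathbb{R}^3$ (outside a Lebesgue-null set), $y_h(t)=y_{h'}(t)$ for all $t\ge0$ implies $h_\alpha=h'_\alpha$, $h_\beta^2=h_\beta'^2$ and $h_1^2=h_1'^2$; that is, all parameters are identifiable in magnitude from measurements of $Y_\alpha Z_\beta$.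
   Context: $X,Y,Z$ denote the Pauli matrices $\sigma_x=\begin{pmatrix}0&1\\1&0\end{pmatrix}$, $\sigma_y=\begin{pmatrix}0&-\mathrm{i}\\ \mathrm{i}&0\end{pmatrix}$, $\sigma_z=\begin{pmatrix}1&0\\0&-1\end{pmatrix}$; a subscript indicates the qubit acted on, with identity on the other qubits (tensor products suppressed). $\hbar=1$. Equivalently, $y_h(t)=Ce^{At}B$ where $A$ is the $24\times24$ matrix of the Heisenberg dynamics $\frac{d}{dt}\langle O\rangle=\langle\mathrm{i}[H,O]\rangle$ on the expectations of the 24 Pauli strings generated from $Y_\alpha Z_\beta$, $B$ is the vector of initial expectations (equal to $1$ at $X_\beta$, $0$ elsewhere) and $C$ selects $\langle Y_\alpha Z_\beta\rangle$. *)

theory Defs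
  imports "HOL-Analysis.Analysis"
begin

text \<open>Operators on the 4-qubit Hilbert space C^16, represented as functions
  nat => nat => complex whose relevant entries are indexed by 0..15.
  Qubit q (q = 0,1,2,3 for alpha, beta, 1, 2) of basis index i is bit q of i.\<close>

type_synonym cmat = "nat \<Rightarrow> nat \<Rightarrow> complex"

definition dim4 :: nat where "dim4 = 16"

definition qbit :: "nat \<Rightarrow> nat \<Rightarrow> nat" where
  "qbit q i = (i div 2 ^ q) mod 2"

definition pI :: cmat where "pI a b = (if a = b then 1 else 0)"
definition pX :: cmat where "pX a b = (if a \<noteq> b then 1 else 0)"
definition pY :: cmat where
  "pY a b = (if a = 0 \<and> b = 1 then - \<i> else if a = 1 \<and> b = 0 then \<i> else 0)"
definition pZ :: cmat where
  "pZ a b = (if a = b then (if a = 0 then 1 else -1) else 0)"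

definition tensor4 :: "cmat \<Rightarrow> cmat \<Rightarrow> cmat \<Rightarrow> cmat \<Rightarrow> cmat" where
  "tensor4 A B C D = (\<lambda>i j. A (qbit 0 i) (qbit 0 j) * B (qbit 1 i) (qbit 1 j)
                         * C (qbit 2 i) (qbit 2 j) * D (qbit 3 i) (qbit 3 j))"

definition madd :: "cmat \<Rightarrow> cmat \<Rightarrow> cmat" where
  "madd A B = (\<lambda>i j. A i j + B i j)"

definition smul :: "complex \<Rightarrow> cmat \<Rightarrow> cmat" where
  "smul c A = (\<lambda>i j. c * A i j)"

definition mmul :: "cmat \<Rightarrow> cmat \<Rightarrow> cmat" where
  "mmul A B = (\<lambda>i j. \<Sum>k<dim4. A i k * B k j)"

definition mid :: cmat where "mid = (\<lambda>i j. if i = j then 1 else 0)"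

fun mpow :: "cmat \<Rightarrow> nat \<Rightarrow> cmat" where
  "mpow A 0 = mid"
| "mpow A (Suc n) = mmul A (mpow A n)"

definition mexp :: "cmat \<Rightarrow> cmat" where
  "mexp A = (\<lambda>i j. \<Sum>n. mpow A n i j / of_nat (fact n))"

definition mtrace :: "cmat \<Rightarrow> complex" where
  "mtrace A = (\<Sum>i<dim4. A i i)"

definition Ham :: "real \<times> real \<times> real \<Rightarrow> cmat" where
  "Ham h = (case h of (ha, hb, h1) \<Rightarrow>
     madd (smul (complex_of_real (ha / 2)) (madd (tensor4 pX pX pI pI) (tensor4 pY pY pI pI)))
    (madd (smul (complex_of_real (hb / 2)) (madd (tensor4 pI pX pX pI) (tensor4 pI pY pY pI)))
          (smul (complex_of_real (h1 / 2)) (madd (tensor4 pI pI pX pX) (tensor4 pI pI pY pY)))))"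

definition rho0 :: cmat where
  "rho0 = tensor4 (smul (1/2) pI) (smul (1/2) (madd pI pX)) (smul (1/2) pI) (smul (1/2) pI)"

definition yout :: "real \<times> real \<times> real \<Rightarrow> real \<Rightarrow> complex" where
  "yout h t = mtrace (mmul (tensor4 pY pZ pI pI)
       (mmul (mexp (smul (- \<i> * complex_of_real t) (Ham h)))
         (mmul rho0 (mexp (smul (\<i> * complex_of_real t) (Ham h))))))"

end

theory Submission
  imports Defs
begin
lemma qbit_lt2[simp]: "qbit q i < 2" by (simp add: qbit_def)
lemma q: "qbit 0 k = k mod 2" "qbit 1 k = k div 2 mod 2" "qbit 2 k = k div 4 mod 2" "qbit 3 k = k div 8 mod 2"
  by (simp_all add: qbit_def)
lemma sum16: "(\<Sum>k<16. f (qbit 0 k) (qbit 1 k) (qbit 2 k) (qbit 3 k)) =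
  (\<Sum>a<2. \<Sum>b<2. \<Sum>c<2. \<Sum>d<2. f a b c d)"
  unfolding q by (simp add: lessThan_nat_numeral add_ac)

datatype pl = PI | PX | PY | PZ

fun pm :: "pl \<Rightarrow> cmat" where
  "pm PI = pI" | "pm PX = pX" | "pm PY = pY" | "pm PZ = pZ"

fun m1 :: "pl \<Rightarrow> pl \<Rightarrow> nat \<times> pl" where
  "m1 PI q = (0, q)"
| "m1 p PI = (0, p)"
| "m1 PX PX = (0, PI)" | "m1 PY PY = (0, PI)" | "m1 PZ PZ = (0, PI)"
| "m1 PX PY = (1, PZ)" | "m1 PY PX = (3, PZ)"
| "m1 PY PZ = (1, PX)" | "m1 PZ PY = (3, PX)"
| "m1 PZ PX = (1, PY)" | "m1 PX PZ = (3, PY)"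

definition ph :: "nat \<Rightarrow> complex" where
  "ph k = (if k mod 4 = 0 then 1 else if k mod 4 = 1 then \<i> else if k mod 4 = 2 then -1 else -\<i>)"

lemma i4m: "\<i> ^ (4 * m + r) = \<i> ^ r"
proof -
  have i4: "\<i> ^ 4 = 1" by (simp add: eval_nat_numeral)
  show ?thesis by (simp only: power_add power_mult i4) simp
qed

lemma ph_pow: "ph k = \<i> ^ k"
proof -
  have e: "\<i> ^ k = \<i> ^ (k mod 4)" using i4m[of "k div 4" "k mod 4"] by simp
  have "k mod 4 < 4" by simp
  then have "k mod 4 = 0 \<or> k mod 4 = 1 \<or> k mod 4 = 2 \<or> k mod 4 = 3" by linarith
  then show ?thesis unfolding e ph_def by (auto simp: power2_eq_square power3_eq_cube)
qed

lemma ph_add: "ph (a + b) = ph a * ph b" by (simp add: ph_pow power_add)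

lemma m2: "a < 2 \<Longrightarrow> b < 2 \<Longrightarrow>
  (\<Sum>c<2. pm p a c * pm q c b) = ph (fst (m1 p q)) * pm (snd (m1 p q)) a b"
  by (cases p; cases q) (auto simp: less_2_cases_iff pI_def pX_def pY_def pZ_def ph_def lessThan_nat_numeral)

lemma m1_snd_comm: "snd (m1 p q) = snd (m1 q p)"
  by (cases p; cases q) auto

type_synonym p4 = "pl \<times> pl \<times> pl \<times> pl"

fun ps :: "p4 \<Rightarrow> cmat" where
  "ps (a, b, c, d) = tensor4 (pm a) (pm b) (pm c) (pm d)"

fun mul4 :: "p4 \<Rightarrow> p4 \<Rightarrow> nat \<times> p4" where
  "mul4 (a, b, c, d) (a', b', c', d') =
     (fst (m1 a a') + fst (m1 b b') + fst (m1 c c') + fst (m1 d d'),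
      (snd (m1 a a'), snd (m1 b b'), snd (m1 c c'), snd (m1 d d')))"

lemma mul4_snd_comm: "snd (mul4 s t) = snd (mul4 t s)"
  by (cases s; cases t) (auto simp: m1_snd_comm)

lemma mmul_tensor: "mmul (tensor4 A B C D) (tensor4 A' B' C' D') i j =
   (\<Sum>a<2. A (qbit 0 i) a * A' a (qbit 0 j)) * (\<Sum>a<2. B (qbit 1 i) a * B' a (qbit 1 j)) *
   (\<Sum>a<2. C (qbit 2 i) a * C' a (qbit 2 j)) * (\<Sum>a<2. D (qbit 3 i) a * D' a (qbit 3 j))"
proof -
  have "mmul (tensor4 A B C D) (tensor4 A' B' C' D') i j =
    (\<Sum>a<2. \<Sum>b<2. \<Sum>c<2. \<Sum>d<2. (A (qbit 0 i) a * A' a (qbit 0 j)) * (B (qbit 1 i) b * B' b (qbit 1 j)) *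
   (C (qbit 2 i) c * C' c (qbit 2 j)) * (D (qbit 3 i) d * D' d (qbit 3 j)))"
    unfolding mmul_def tensor4_def dim4_def
    apply (rule trans[OF _ sum16[of "\<lambda>a b c d. (A (qbit 0 i) a * A' a (qbit 0 j)) * (B (qbit 1 i) b * B' b (qbit 1 j)) *
   (C (qbit 2 i) c * C' c (qbit 2 j)) * (D (qbit 3 i) d * D' d (qbit 3 j))"]])
    by (rule sum.cong) (simp_all add: ac_simps)
  also have "\<dots> = (\<Sum>a<2. A (qbit 0 i) a * A' a (qbit 0 j)) * (\<Sum>a<2. B (qbit 1 i) a * B' a (qbit 1 j)) *
   (\<Sum>a<2. C (qbit 2 i) a * C' a (qbit 2 j)) * (\<Sum>a<2. D (qbit 3 i) a * D' a (qbit 3 j))"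
    by (simp add: lessThan_nat_numeral algebra_simps)
  finally show ?thesis .
qed

lemma mmul_ps: "mmul (ps s) (ps t) = smul (ph (fst (mul4 s t))) (ps (snd (mul4 s t)))"
  apply (cases s; cases t)
  apply (simp only: ps.simps fun_eq_iff mmul_tensor m2[OF qbit_lt2 qbit_lt2])
  apply (simp add: smul_def tensor4_def ph_add)
  done


definition mzero :: cmat where "mzero = (\<lambda>i j. 0)"

lemma mmul_madd_l: "mmul (madd A B) C = madd (mmul A C) (mmul B C)"
  by (simp add: fun_eq_iff mmul_def madd_def distrib_right sum.distrib)
lemma mmul_madd_r: "mmul C (madd A B) = madd (mmul C A) (mmul C B)"
  by (simp add: fun_eq_iff mmul_def madd_def distrib_left sum.distrib)
lemma mmul_smul_l: "mmul (smul c A) B = smul c (mmul A B)"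
  by (simp add: fun_eq_iff mmul_def smul_def sum_distrib_left mult.assoc)
lemma mmul_smul_r: "mmul A (smul c B) = smul c (mmul A B)"
  by (simp add: fun_eq_iff mmul_def smul_def sum_distrib_left ac_simps)
lemma mmul_zero_l: "mmul mzero B = mzero" by (simp add: fun_eq_iff mmul_def mzero_def)
lemma mmul_zero_r: "mmul B mzero = mzero" by (simp add: fun_eq_iff mmul_def mzero_def)

fun interp :: "(complex \<times> p4) list \<Rightarrow> cmat" where
  "interp [] = mzero"
| "interp ((c, s) # xs) = madd (smul c (ps s)) (interp xs)"

lemma interp_append: "interp (xs @ ys) = madd (interp xs) (interp ys)"
  by (induction xs rule: interp.induct) (auto simp: fun_eq_iff madd_def mzero_def)

definition scl :: "complex \<Rightarrow> (complex \<times> p4) list \<Rightarrow> (complex \<times> p4) list" where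
  "scl c ys = map (\<lambda>(d, q). (c * d, q)) ys"

lemma interp_scl: "interp (scl c ys) = smul c (interp ys)"
  unfolding scl_def
  by (induction ys rule: interp.induct) (auto simp: fun_eq_iff madd_def mzero_def smul_def algebra_simps)

definition Hl :: "real \<times> real \<times> real \<Rightarrow> (complex \<times> p4) list" where
  "Hl h = (case h of (ha, hb, h1) \<Rightarrow>
    [(complex_of_real (ha/2), (PX,PX,PI,PI)), (complex_of_real (ha/2), (PY,PY,PI,PI)),
     (complex_of_real (hb/2), (PI,PX,PX,PI)), (complex_of_real (hb/2), (PI,PY,PY,PI)),
     (complex_of_real (h1/2), (PI,PI,PX,PX)), (complex_of_real (h1/2), (PI,PI,PY,PY))])"

lemma Ham_Hl: "Ham h = interp (Hl h)"
  by (cases h) (simp add: Ham_def Hl_def fun_eq_iff madd_def smul_def mzero_def algebra_simps)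

definition Lop :: "real \<times> real \<times> real \<Rightarrow> cmat \<Rightarrow> cmat" where
  "Lop h M = madd (smul \<i> (mmul (Ham h) M)) (smul (-\<i>) (mmul M (Ham h)))"

definition comm1 :: "complex \<times> p4 \<Rightarrow> p4 \<Rightarrow> (complex \<times> p4) list" where
  "comm1 dt s = (case dt of (d, t) \<Rightarrow>
     (if fst (mul4 t s) mod 4 = fst (mul4 s t) mod 4 then []
      else [(\<i> * d * (ph (fst (mul4 t s)) - ph (fst (mul4 s t))), snd (mul4 t s))]))"

lemma ph_mod: "ph (k mod 4) = ph k" by (simp add: ph_def)

lemma comm1_ok: "madd (smul \<i> (mmul (smul d (ps t)) (ps s))) (smul (-\<i>) (mmul (ps s) (smul d (ps t))))
   = interp (comm1 (d, t) s)"
proof -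
  have e: "snd (mul4 s t) = snd (mul4 t s)" by (rule mul4_snd_comm)
  show ?thesis
  proof (cases "fst (mul4 t s) mod 4 = fst (mul4 s t) mod 4")
    case True
    then have "ph (fst (mul4 t s)) = ph (fst (mul4 s t))" by (metis ph_mod)
    then show ?thesis using True
      by (simp only: mmul_smul_l mmul_smul_r mmul_ps e) (simp add: comm1_def fun_eq_iff madd_def smul_def mzero_def algebra_simps)
  next
    case False
    then show ?thesis
      by (simp only: mmul_smul_l mmul_smul_r mmul_ps e) (simp add: comm1_def fun_eq_iff madd_def smul_def mzero_def algebra_simps)
  qed
qed

definition commL :: "(complex \<times> p4) list \<Rightarrow> p4 \<Rightarrow> (complex \<times> p4) list" where
  "commL K s = concat (map (\<lambda>dt. comm1 dt s) K)"

lemma commL_ok: "madd (smul \<i> (mmul (interp K) (ps s))) (smul (-\<i>) (mmul (ps s) (interp K)))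
   = interp (commL K s)"
proof (induction K rule: interp.induct)
  case 1
  then show ?case by (simp add: commL_def mmul_zero_l mmul_zero_r) (simp add: fun_eq_iff madd_def smul_def mzero_def)
next
  case (2 c t xs)
  have "interp (commL ((c, t) # xs) s) = madd (interp (comm1 (c,t) s)) (interp (commL xs s))"
    by (simp add: commL_def interp_append)
  also have "\<dots> = madd (madd (smul \<i> (mmul (smul c (ps t)) (ps s))) (smul (-\<i>) (mmul (ps s) (smul c (ps t)))))
      (madd (smul \<i> (mmul (interp xs) (ps s))) (smul (-\<i>) (mmul (ps s) (interp xs))))"
    using 2 comm1_ok by simp
  also have "\<dots> = madd (smul \<i> (mmul (interp ((c, t) # xs)) (ps s))) (smul (-\<i>) (mmul (ps s) (interp ((c, t) # xs))))"
    by (simp only: interp.simps mmul_madd_l mmul_madd_r mmul_smul_l mmul_smul_r) (simp add: fun_eq_iff madd_def smul_def algebra_simps)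
  finally show ?case by simp
qed

definition Lsym :: "real \<times> real \<times> real \<Rightarrow> (complex \<times> p4) list \<Rightarrow> (complex \<times> p4) list" where
  "Lsym h xs = concat (map (\<lambda>(c, s). scl c (commL (Hl h) s)) xs)"

lemma Lop_interp: "Lop h (interp xs) = interp (Lsym h xs)"
proof (induction xs rule: interp.induct)
  case 1
  then show ?case by (simp add: Lsym_def Lop_def mmul_zero_l mmul_zero_r) (simp add: fun_eq_iff madd_def smul_def mzero_def)
next
  case (2 c s xs)
  have "interp (Lsym h ((c, s) # xs)) = madd (smul c (interp (commL (Hl h) s))) (interp (Lsym h xs))"
    by (simp add: Lsym_def interp_append interp_scl)
  also have "\<dots> = madd (smul c (madd (smul \<i> (mmul (Ham h) (ps s))) (smul (-\<i>) (mmul (ps s) (Ham h))))) (Lop h (interp xs))"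
    using 2 by (simp add: commL_ok[symmetric] Ham_Hl)
  also have "\<dots> = Lop h (interp ((c, s) # xs))"
    by (simp only: Lop_def interp.simps mmul_madd_l mmul_madd_r mmul_smul_l mmul_smul_r) (simp add: fun_eq_iff madd_def smul_def algebra_simps)
  finally show ?case by simp
qed

fun addt :: "complex \<times> p4 \<Rightarrow> (complex \<times> p4) list \<Rightarrow> (complex \<times> p4) list" where
  "addt x [] = [x]"
| "addt (c, s) ((d, t) # xs) = (if s = t then (c + d, t) # xs else (d, t) # addt (c, s) xs)"

lemma interp_addt: "interp (addt (c, s) xs) = madd (smul c (ps s)) (interp xs)"
  by (induction "(c, s)" xs rule: addt.induct)
     (auto simp: fun_eq_iff madd_def smul_def algebra_simps)

definition nrm :: "(complex \<times> p4) list \<Rightarrow> (complex \<times> p4) list" where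
  "nrm xs = foldr addt xs []"

lemma interp_nrm: "interp (nrm xs) = interp xs"
  unfolding nrm_def by (induction xs rule: interp.induct) (auto simp: interp_addt)

definition trr :: "p4 \<Rightarrow> complex" where "trr s = mtrace (mmul (ps s) rho0)"

lemma mtrace_madd: "mtrace (madd A B) = mtrace A + mtrace B"
  by (simp add: mtrace_def madd_def sum.distrib)
lemma mtrace_smul: "mtrace (smul c A) = c * mtrace A"
  by (simp add: mtrace_def smul_def sum_distrib_left)

lemma mtrace_zero: "mtrace mzero = 0" by (simp add: mtrace_def mzero_def)

lemma trace_interp: "mtrace (mmul (interp xs) rho0) = (\<Sum>(c, s)\<leftarrow>xs. c * trr s)"
  by (induction xs rule: interp.induct)
     (auto simp: mmul_zero_l mmul_madd_l mmul_smul_l mtrace_madd mtrace_smul trr_def mtrace_zero)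


definition tt1 :: "pl \<Rightarrow> complex" where
  "tt1 p = (\<Sum>x<2. \<Sum>y<2. pm p x y * smul (1/2) pI y x)"
definition tt2 :: "pl \<Rightarrow> complex" where
  "tt2 p = (\<Sum>x<2. \<Sum>y<2. pm p x y * smul (1/2) (madd pI pX) y x)"

lemma trr_eq: "trr (a, b, c, d) = tt1 a * tt2 b * tt1 c * tt1 d"
proof -
  define g1 where "g1 u = (\<Sum>x<2. pm a u x * smul (1/2) pI x u)" for u
  define g2 where "g2 u = (\<Sum>x<2. pm b u x * smul (1/2) (madd pI pX) x u)" for u
  define g3 where "g3 u = (\<Sum>x<2. pm c u x * smul (1/2) pI x u)" for u
  define g4 where "g4 u = (\<Sum>x<2. pm d u x * smul (1/2) pI x u)" for u
  have "trr (a, b, c, d) = (\<Sum>i<16. g1 (qbit 0 i) * g2 (qbit 1 i) * g3 (qbit 2 i) * g4 (qbit 3 i))"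
    by (simp add: trr_def mtrace_def dim4_def rho0_def mmul_tensor g1_def g2_def g3_def g4_def)
  also have "\<dots> = (\<Sum>u<2. \<Sum>v<2. \<Sum>w<2. \<Sum>z<2. g1 u * g2 v * g3 w * g4 z)"
    by (rule sum16)
  also have "\<dots> = (\<Sum>u<2. g1 u) * (\<Sum>u<2. g2 u) * (\<Sum>u<2. g3 u) * (\<Sum>u<2. g4 u)"
    by (simp add: lessThan_nat_numeral algebra_simps)
  also have "\<dots> = tt1 a * tt2 b * tt1 c * tt1 d"
    by (simp add: tt1_def tt2_def g1_def g2_def g3_def g4_def)
  finally show ?thesis .
qed

lemma tt1_simps[simp]: "tt1 PI = 1" "tt1 PX = 0" "tt1 PY = 0" "tt1 PZ = 0"
  by (simp_all add: tt1_def smul_def pI_def pX_def pY_def pZ_def lessThan_nat_numeral)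
lemma tt2_simps[simp]: "tt2 PI = 1" "tt2 PX = 1" "tt2 PY = 0" "tt2 PZ = 0"
  by (simp_all add: tt2_def smul_def madd_def pI_def pX_def pY_def pZ_def lessThan_nat_numeral)

definition X0 :: "(complex \<times> p4) list" where "X0 = [(1, (PY, PZ, PI, PI))]"
definition stp :: "real \<times> real \<times> real \<Rightarrow> (complex \<times> p4) list \<Rightarrow> (complex \<times> p4) list" where
  "stp h xs = nrm (Lsym h xs)"

lemma Oy_X0: "tensor4 pY pZ pI pI = interp X0"
  by (simp add: X0_def fun_eq_iff madd_def smul_def mzero_def)

lemma Lop_pow: "(Lop h ^^ n) (interp xs) = interp ((stp h ^^ n) xs)"
  by (induction n) (auto simp: stp_def Lop_interp interp_nrm)

definition mom :: "real \<times> real \<times> real \<Rightarrow> nat \<Rightarrow> complex" where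
  "mom h n = mtrace (mmul ((Lop h ^^ n) (tensor4 pY pZ pI pI)) rho0)"

lemma mom_sym: "mom h n = (\<Sum>(c, s)\<leftarrow>(stp h ^^ n) X0. c * trr s)"
  by (simp add: mom_def Oy_X0 Lop_pow trace_interp)

lemma fp3: "(f ^^ 3) x = f (f (f x))" by (simp add: numeral_eq_Suc)
lemma fp5: "(f ^^ 5) x = f (f (f (f (f x))))" by (simp add: numeral_eq_Suc)

lemma mom1: "mom (ha, hb, h1) 1 = complex_of_real (- ha)"
  by (simp add: mom_sym X0_def stp_def Lsym_def nrm_def commL_def comm1_def scl_def Hl_def ph_def trr_eq) (simp add: algebra_simps)
lemma mom3: "mom (ha, hb, h1) 3 = complex_of_real (ha^3 + 4*ha*hb^2)"
  by (simp add: mom_sym fp3 X0_def stp_def Lsym_def nrm_def commL_def comm1_def scl_def Hl_def ph_def trr_eq)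
     (simp add: algebra_simps power2_eq_square power3_eq_cube)
lemma mom5: "mom (ha, hb, h1) 5 = complex_of_real (- (ha^5 + 17*ha^3*hb^2 + 16*ha*hb^4 + 6*ha*hb^2*h1^2))"
  by (simp add: mom_sym fp5 X0_def stp_def Lsym_def nrm_def commL_def comm1_def scl_def Hl_def ph_def trr_eq)
     (simp add: algebra_simps power2_eq_square power3_eq_cube eval_nat_numeral)

lemma mmul_assoc: "mmul (mmul A B) C = mmul A (mmul B C)"
  unfolding fun_eq_iff mmul_def sum_distrib_right sum_distrib_left mult.assoc by (auto intro: sum.swap)

lemma mtrace_comm: "mtrace (mmul A B) = mtrace (mmul B A)"
  unfolding mtrace_def mmul_def by (subst sum.swap) (simp add: mult.commute)

lemma mpow_smul: "mpow (smul c A) n = smul (c ^ n) (mpow A n)"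
  by (induction n) (simp_all add: smul_def mid_def fun_eq_iff mmul_def sum_distrib_left ac_simps)

definition PS :: "cmat \<Rightarrow> nat \<Rightarrow> nat \<Rightarrow> complex \<Rightarrow> complex" where
  "PS A i j z = (\<Sum>n. (mpow A n i j / of_nat (fact n)) * z ^ n)"

lemma mexp_PS: "mexp (smul z A) = (\<lambda>i j. PS A i j z)"
  by (simp only: mexp_def PS_def mpow_smul) (simp add: smul_def ac_simps)

lemma mpow_bound:
  assumes "\<And>i j. norm (A i j) \<le> K"
  shows "norm (mpow A n i j) \<le> (16 * K) ^ n"
proof (induction n arbitrary: i j)
  case 0
  then show ?case by (simp add: mid_def)
next
  case (Suc n)
  have K: "0 \<le> K" using assms[of 0 0] norm_ge_zero order_trans by blast
  have "norm (mpow A (Suc n) i j) = norm (\<Sum>k<16. A i k * mpow A n k j)"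
    by (simp add: mmul_def dim4_def)
  also have "\<dots> \<le> (\<Sum>k<16::nat. norm (A i k * mpow A n k j))" by (rule norm_sum)
  also have "\<dots> \<le> (\<Sum>k<16::nat. K * (16 * K) ^ n)"
    by (rule sum_mono) (simp only: norm_mult, rule mult_mono[OF assms Suc.IH K norm_ge_zero])
  also have "\<dots> = (16 * K) ^ Suc n" by simp
  finally show ?case .
qed

lemma PS_summable:
  assumes "\<And>i j. norm (A i j) \<le> K"
  shows "summable (\<lambda>n. (mpow A n i j / of_nat (fact n)) * z ^ n)"
proof (rule summable_comparison_test')
  show "summable (\<lambda>n. inverse (fact n) * (16 * K * norm z) ^ n)" by (rule summable_exp)
  fix n :: nat
  have "norm ((mpow A n i j / of_nat (fact n)) * z ^ n) = norm (mpow A n i j) / fact n * norm z ^ n"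
    by (simp add: norm_mult norm_divide norm_power)
  also have "\<dots> \<le> (16 * K) ^ n / fact n * norm z ^ n"
    by (intro mult_right_mono divide_right_mono mpow_bound assms) auto
  also have "\<dots> = inverse (fact n) * (16 * K * norm z) ^ n"
    by (simp add: power_mult_distrib field_simps)
  finally show "norm ((mpow A n i j / of_nat (fact n)) * z ^ n) \<le> inverse (fact n) * (16 * K * norm z) ^ n" .
qed

lemma PS_deriv:
  assumes "\<And>i j. norm (A i j) \<le> K"
  shows "(PS A i j has_field_derivative (\<Sum>k<dim4. A i k * PS A k j z)) (at z)"
proof -
  have d: "((\<lambda>z. \<Sum>n. (mpow A n i j / of_nat (fact n)) * z ^ n) has_field_derivative
     (\<Sum>n. diffs (\<lambda>n. mpow A n i j / of_nat (fact n)) n * z ^ n)) (at z)"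
    by (rule termdiffs_strong_converges_everywhere) (rule PS_summable[OF assms])
  have "(\<Sum>n. diffs (\<lambda>n. mpow A n i j / of_nat (fact n)) n * z ^ n)
      = (\<Sum>n. \<Sum>k<dim4. A i k * ((mpow A n k j / of_nat (fact n)) * z ^ n))"
  proof -
    have f: "of_nat (Suc n) * (x / of_nat (fact (Suc n))) = x / (of_nat (fact n)::complex)" for n x
    proof -
      have "of_nat (fact (Suc n)) = (of_nat (Suc n) * of_nat (fact n) :: complex)" by (simp only: fact_Suc of_nat_mult of_nat_id)
      moreover have "(of_nat (Suc n)::complex) \<noteq> 0" by (simp only: of_nat_eq_0_iff)
      ultimately show ?thesis by simp
    qed
    have "diffs (\<lambda>n. mpow A n i j / of_nat (fact n)) n * z ^ n = (\<Sum>k<dim4. A i k * ((mpow A n k j / of_nat (fact n)) * z ^ n))" for n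
      unfolding diffs_def f by (simp add: mmul_def sum_distrib_right sum_distrib_left sum_divide_distrib mult_ac)
    then show ?thesis by simp
  qed
  also have "\<dots> = (\<Sum>k<dim4. \<Sum>n. A i k * ((mpow A n k j / of_nat (fact n)) * z ^ n))"
    by (rule suminf_sum) (intro summable_mult PS_summable[OF assms])
  also have "\<dots> = (\<Sum>k<dim4. A i k * PS A k j z)"
    unfolding PS_def by (rule sum.cong[OF refl], rule suminf_mult[OF PS_summable[OF assms]])
  finally show ?thesis using d by (simp add: PS_def[abs_def])
qed


lemma delta_l: "i < dim4 \<Longrightarrow> (\<Sum>k<dim4. mid i k * B k) = B i"
proof -
  assume "i < dim4"
  have "mid i k * B k = (if i = k then B k else 0)" for k by (simp add: mid_def)
  then show ?thesis using \<open>i < dim4\<close> by (simp add: sum.delta)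
qed
lemma delta_r: "j < dim4 \<Longrightarrow> (\<Sum>k<dim4. B k * mid k j) = B j"
proof -
  assume "j < dim4"
  have "B k * mid k j = (if j = k then B k else 0)" for k by (simp add: mid_def)
  then show ?thesis using \<open>j < dim4\<close> by (simp add: sum.delta)
qed

lemma mpow_right: "i < dim4 \<Longrightarrow> j < dim4 \<Longrightarrow> mpow A (Suc n) i j = (\<Sum>k<dim4. mpow A n i k * A k j)"
proof (induction n arbitrary: i)
  case 0
  then show ?case by (simp add: mmul_def delta_l delta_r)
next
  case (Suc n)
  have "mpow A (Suc (Suc n)) i j = (\<Sum>k<dim4. A i k * mpow A (Suc n) k j)" by (simp add: mmul_def)
  also have "\<dots> = (\<Sum>k<dim4. A i k * (\<Sum>l<dim4. mpow A n k l * A l j))"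
    using Suc by (intro sum.cong) auto
  also have "\<dots> = (\<Sum>l<dim4. (\<Sum>k<dim4. A i k * mpow A n k l) * A l j)"
    unfolding sum_distrib_left sum_distrib_right mult.assoc by (rule sum.swap)
  also have "\<dots> = (\<Sum>l<dim4. mpow A (Suc n) i l * A l j)" by (simp add: mmul_def)
  finally show ?case .
qed

lemma PS_comm:
  assumes "\<And>i j. norm (A i j) \<le> K" "i < dim4" "j < dim4"
  shows "(\<Sum>k<dim4. A i k * PS A k j z) = (\<Sum>k<dim4. PS A i k z * A k j)"
proof -
  have "(\<Sum>k<dim4. A i k * PS A k j z) = (\<Sum>k<dim4. \<Sum>n. A i k * ((mpow A n k j / of_nat (fact n)) * z ^ n))"
    unfolding PS_def by (rule sum.cong[OF refl], rule suminf_mult[OF PS_summable[OF assms(1)], symmetric])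
  also have "\<dots> = (\<Sum>n. \<Sum>k<dim4. A i k * ((mpow A n k j / of_nat (fact n)) * z ^ n))"
    by (rule suminf_sum[symmetric]) (intro summable_mult PS_summable[OF assms(1)])
  also have "\<dots> = (\<Sum>n. \<Sum>k<dim4. ((mpow A n i k / of_nat (fact n)) * z ^ n) * A k j)"
  proof (rule suminf_cong)
    fix n
    have "(\<Sum>k<dim4. A i k * ((mpow A n k j / of_nat (fact n)) * z ^ n)) = mpow A (Suc n) i j / of_nat (fact n) * z ^ n"
      by (simp add: mmul_def sum_distrib_right sum_distrib_left sum_divide_distrib mult_ac)
    also have "\<dots> = (\<Sum>k<dim4. ((mpow A n i k / of_nat (fact n)) * z ^ n) * A k j)"
      using mpow_right[OF assms(2,3)] by (simp add: sum_distrib_right sum_distrib_left sum_divide_distrib mult_ac)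
    finally show "(\<Sum>k<dim4. A i k * ((mpow A n k j / of_nat (fact n)) * z ^ n)) = (\<Sum>k<dim4. ((mpow A n i k / of_nat (fact n)) * z ^ n) * A k j)" .
  qed
  also have "\<dots> = (\<Sum>k<dim4. \<Sum>n. ((mpow A n i k / of_nat (fact n)) * z ^ n) * A k j)"
    by (rule suminf_sum) (intro summable_mult2 PS_summable[OF assms(1)])
  also have "\<dots> = (\<Sum>k<dim4. PS A i k z * A k j)"
    unfolding PS_def by (rule sum.cong[OF refl], rule suminf_mult2[OF PS_summable[OF assms(1)], symmetric])
  finally show ?thesis .
qed

definition Ef :: "cmat \<Rightarrow> complex \<Rightarrow> real \<Rightarrow> cmat" where
  "Ef A c t = (\<lambda>i j. PS A i j (c * of_real t))"

lemma Ef_deriv: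
  assumes "\<And>i j. norm (A i j) \<le> K"
  shows "((\<lambda>t. Ef A c t i j) has_vector_derivative smul c (mmul A (Ef A c t)) i j) (at t)"
proof -
  have f: "((\<lambda>t. c * of_real t) has_vector_derivative c) (at t)"
    using has_vector_derivative_mult_right[OF has_vector_derivative_of_real[OF DERIV_ident], of c] by simp
  have "((PS A i j \<circ> (\<lambda>t. c * of_real t)) has_vector_derivative (c * (\<Sum>k<dim4. A i k * PS A k j (c * of_real t)))) (at t)"
    by (rule field_vector_diff_chain_at[OF f PS_deriv[OF assms]])
  then show ?thesis by (simp add: Ef_def comp_def smul_def mmul_def)
qed

lemma Ef_deriv_r:
  assumes "\<And>i j. norm (A i j) \<le> K" "i < dim4" "j < dim4"
  shows "((\<lambda>t. Ef A c t i j) has_vector_derivative smul c (mmul (Ef A c t) A) i j) (at t)"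
  using Ef_deriv[OF assms(1), where c = c and t = t and i = i and j = j] PS_comm[OF assms, where z = "c * of_real t"]
  by (simp add: smul_def mmul_def Ef_def)

lemma trip_deriv:
  assumes "\<And>k l. k < dim4 \<Longrightarrow> l < dim4 \<Longrightarrow> ((\<lambda>t. X t k l) has_vector_derivative X' k l) (at t)"
    and "\<And>k l. k < dim4 \<Longrightarrow> l < dim4 \<Longrightarrow> ((\<lambda>t. Y t k l) has_vector_derivative Y' k l) (at t)"
  shows "((\<lambda>t. mtrace (mmul M (mmul (X t) (mmul R (Y t))))) has_vector_derivative
           mtrace (mmul M (madd (mmul X' (mmul R (Y t))) (mmul (X t) (mmul R Y'))))) (at t)"
  unfolding mtrace_def mmul_def madd_def
  apply (rule has_vector_derivative_eq_rhs)
   apply (rule has_vector_derivative_sum)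
   apply (rule has_vector_derivative_sum)
   apply (rule has_vector_derivative_mult_right)
   apply (rule has_vector_derivative_sum)
   apply (rule has_vector_derivative_mult)
    apply (rule assms; simp)
   apply (rule has_vector_derivative_sum)
   apply (rule has_vector_derivative_mult_right)
   apply (rule assms; simp)
  apply (simp add: sum.distrib distrib_left distrib_right algebra_simps)
  done

definition Fv :: "cmat \<Rightarrow> cmat \<Rightarrow> real \<Rightarrow> complex" where
  "Fv A M t = mtrace (mmul M (mmul (Ef A (-\<i>) t) (mmul rho0 (Ef A \<i> t))))"

lemma Fv_deriv:
  assumes "\<And>i j. norm (A i j) \<le> K"
  shows "(Fv A M has_vector_derivative Fv A (madd (smul \<i> (mmul A M)) (smul (-\<i>) (mmul M A))) t) (at t)"
proof -
  let ?X = "Ef A (-\<i>) t" and ?Y = "Ef A \<i> t"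
  have d: "(Fv A M has_vector_derivative
      mtrace (mmul M (madd (mmul (smul (-\<i>) (mmul A ?X)) (mmul rho0 ?Y)) (mmul ?X (mmul rho0 (smul \<i> (mmul ?Y A))))))) (at t)"
    unfolding Fv_def
    by (rule trip_deriv) (auto intro: Ef_deriv[OF assms] Ef_deriv_r[OF assms])
  define G where "G = mmul ?X (mmul rho0 ?Y)"
  have e1: "mmul (mmul A ?X) (mmul rho0 ?Y) = mmul A G" by (simp add: G_def mmul_assoc)
  have e2: "mmul ?X (mmul rho0 (mmul ?Y A)) = mmul G A" by (simp add: G_def mmul_assoc)
  have "mtrace (mmul M (madd (mmul (smul (-\<i>) (mmul A ?X)) (mmul rho0 ?Y)) (mmul ?X (mmul rho0 (smul \<i> (mmul ?Y A))))))
     = - \<i> * mtrace (mmul M (mmul A G)) + \<i> * mtrace (mmul M (mmul G A))"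
    by (simp add: mmul_madd_r mmul_smul_l mmul_smul_r mtrace_madd mtrace_smul e1 e2)
  also have "mtrace (mmul M (mmul A G)) = mtrace (mmul (mmul M A) G)" by (simp add: mmul_assoc)
  also have "mtrace (mmul M (mmul G A)) = mtrace (mmul (mmul A M) G)"
    by (metis mmul_assoc mtrace_comm)
  also have "- \<i> * mtrace (mmul (mmul M A) G) + \<i> * mtrace (mmul (mmul A M) G)
     = Fv A (madd (smul \<i> (mmul A M)) (smul (-\<i>) (mmul M A))) t"
    by (simp add: Fv_def G_def[symmetric] mmul_madd_l mmul_smul_l mtrace_madd mtrace_smul)
  finally show ?thesis using d by simp
qed

lemma Ef_zero: "Ef A c 0 = mid"
  by (simp only: Ef_def PS_def of_real_0 mult_zero_right powser_zero) (simp add: fun_eq_iff)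

lemma mtrace_cong: "(\<And>k i. k < dim4 \<Longrightarrow> i < dim4 \<Longrightarrow> X k i = X' k i) \<Longrightarrow> mtrace (mmul M X) = mtrace (mmul M X')"
  unfolding mtrace_def mmul_def by (intro sum.cong) auto

lemma Fv_zero: "Fv A M 0 = mtrace (mmul M rho0)"
  unfolding Fv_def Ef_zero
  by (rule mtrace_cong) (simp add: mmul_def delta_l delta_r)


lemma norm_pm: "norm (pm p a b) \<le> 1"
  by (cases p) (auto simp: pI_def pX_def pY_def pZ_def)

lemma norm_ps: "norm (ps s i j) \<le> 1"
  by (cases s) (auto simp: tensor4_def norm_mult intro!: mult_le_one norm_pm)

lemma norm_interp: "norm (interp xs i j) \<le> (\<Sum>(c, s)\<leftarrow>xs. norm c)"
proof (induction xs rule: interp.induct)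
  case 1
  then show ?case by (simp add: mzero_def)
next
  case (2 c s xs)
  have "norm (interp ((c, s) # xs) i j) = norm (c * ps s i j + interp xs i j)"
    by (simp add: madd_def smul_def)
  also have "\<dots> \<le> norm c * norm (ps s i j) + norm (interp xs i j)"
    by (metis norm_mult norm_triangle_ineq)
  also have "\<dots> \<le> norm c * 1 + (\<Sum>(c, s)\<leftarrow>xs. norm c)"
    by (intro add_mono mult_left_mono norm_ps 2) simp
  finally show ?case by simp
qed

lemma Ham_bound: "\<exists>K. \<forall>i j. norm (Ham h i j) \<le> K"
  using norm_interp[of "Hl h"] unfolding Ham_Hl by blast

lemma yout_Fv: "yout h t = Fv (Ham h) (tensor4 pY pZ pI pI) t"
  unfolding yout_def Fv_def Ef_def mexp_PS ..

lemma mom_Fv: "mom h n = Fv (Ham h) ((Lop h ^^ n) (tensor4 pY pZ pI pI)) 0"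
  by (simp add: mom_def Fv_zero)

lemma Fv_iter:
  "(Fv (Ham h) ((Lop h ^^ n) (tensor4 pY pZ pI pI)) has_vector_derivative
     Fv (Ham h) ((Lop h ^^ Suc n) (tensor4 pY pZ pI pI)) t) (at t)"
proof -
  obtain K where K: "\<And>i j. norm (Ham h i j) \<le> K" using Ham_bound by blast
  show ?thesis using Fv_deriv[OF K] by (simp add: Lop_def)
qed

lemma moments_eq:
  assumes "\<forall>t\<ge>0. yout h t = yout h' t"
  shows "mom h n = mom h' n"
proof -
  define D where "D n t = Fv (Ham h) ((Lop h ^^ n) (tensor4 pY pZ pI pI)) t
     - Fv (Ham h') ((Lop h' ^^ n) (tensor4 pY pZ pI pI)) t" for n t
  have dD: "(D n has_vector_derivative D (Suc n) t) (at t)" for n t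
    unfolding D_def[abs_def] by (intro has_vector_derivative_diff Fv_iter)
  have pos: "\<forall>t>0. D n t = 0" for n
  proof (induction n)
    case 0
    then show ?case using assms by (simp add: D_def yout_Fv)
  next
    case (Suc n)
    show ?case
    proof (intro allI impI)
      fix t :: real assume t: "t > 0"
      have "(D n has_vector_derivative 0) (at t)"
        by (rule has_vector_derivative_transform_within_open[OF has_vector_derivative_const open_greaterThan, of t])
           (use t Suc in auto)
      then show "D (Suc n) t = 0" using vector_derivative_unique_at[OF dD] by metis
    qed
  qed
  have "D n 0 = 0"
  proof -
    have "continuous (at 0) (D n)" by (rule has_vector_derivative_continuous[OF dD])
    then have "(D n \<longlongrightarrow> D n 0) (at 0)" by (simp add: continuous_at)
    then have l1: "(D n \<longlongrightarrow> D n 0) (at_right 0)" by (rule tendsto_within_subset[of _ _ _ UNIV]) simp_all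
    have "eventually (\<lambda>t. D n t = 0) (at_right (0::real))"
      using eventually_at_right_less[of "0::real"] by eventually_elim (use pos in auto)
    then have l2: "(D n \<longlongrightarrow> 0) (at_right 0)" by (rule tendsto_eventually)
    show ?thesis using tendsto_unique[OF trivial_limit_at_right_real l1 l2] .
  qed
  then show ?thesis by (simp add: D_def mom_Fv)
qed

lemma null_part: "{x :: (real \<times> real \<times> real) \<times> (real \<times> real \<times> real). fst (fst x) = 0 \<or> fst (snd (fst x)) = 0} \<in> null_sets lebesgue"
proof -
  have "{x :: (real \<times> real \<times> real) \<times> (real \<times> real \<times> real). fst (fst x) = 0 \<or> fst (snd (fst x)) = 0}
    = {x. ((1,0,0),(0,0,0)) \<bullet> x = 0} \<union> {x. ((0,1,0),(0,0,0)) \<bullet> x = 0}"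
    by (auto simp: inner_prod_def)
  moreover have "negligible {x :: (real \<times> real \<times> real) \<times> (real \<times> real \<times> real). ((1,0,0),(0,0,0)) \<bullet> x = 0}"
    by (rule negligible_hyperplane) (simp add: zero_prod_def)
  moreover have "negligible {x :: (real \<times> real \<times> real) \<times> (real \<times> real \<times> real). ((0,1,0),(0,0,0)) \<bullet> x = 0}"
    by (rule negligible_hyperplane) (simp add: zero_prod_def)
  ultimately show ?thesis by (simp add: negligible_iff_null_sets[symmetric])
qed

lemma ident:
  fixes ha hb h1 ha' hb' h1' :: real
  assumes "ha \<noteq> 0" "hb \<noteq> 0"
    and "\<forall>t\<ge>0. yout (ha, hb, h1) t = yout (ha', hb', h1') t"
  shows "ha = ha' \<and> hb^2 = hb'^2 \<and> h1^2 = h1'^2"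
proof -
  have e1: "- ha = - ha'" using moments_eq[OF assms(3), of 1] mom1 of_real_eq_iff by metis
  have e3: "ha^3 + 4*ha*hb^2 = ha'^3 + 4*ha'*hb'^2" using moments_eq[OF assms(3), of 3] mom3 of_real_eq_iff by metis
  have e5: "- (ha^5 + 17*ha^3*hb^2 + 16*ha*hb^4 + 6*ha*hb^2*h1^2) = - (ha'^5 + 17*ha'^3*hb'^2 + 16*ha'*hb'^4 + 6*ha'*hb'^2*h1'^2)"
    using moments_eq[OF assms(3), of 5] mom5 of_real_eq_iff by metis
  have a: "ha = ha'" using e1 by simp
  have "4*ha*hb^2 = 4*ha*hb'^2" using e3 a by simp
  then have b: "hb^2 = hb'^2" using assms(1) by simp
  have "6*ha*hb^2*h1^2 = 6*ha*hb^2*h1'^2"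
  proof -
    have "hb^4 = hb'^4" using b by (metis power_mult numeral_times_numeral semiring_norm(12) num_double)
    then show ?thesis using e5 a b by (simp add: algebra_simps) metis
  qed
  then have c: "h1^2 = h1'^2" using assms(1,2) by simp
  show ?thesis using a b c by simp
qed

theorem theorem2:
  shows "\<exists>N :: ((real \<times> real \<times> real) \<times> (real \<times> real \<times> real)) set.
           N \<in> null_sets lebesgue \<and>
           (\<forall>h h'. (h, h') \<notin> N \<longrightarrow>
              (\<forall>t\<ge>0. yout h t = yout h' t) \<longrightarrow>
              fst h = fst h' \<and>
              (fst (snd h))\<^sup>2 = (fst (snd h'))\<^sup>2 \<and>
              (snd (snd h))\<^sup>2 = (snd (snd h'))\<^sup>2)"
proof (intro exI conjI allI impI)
  show "{x :: (real \<times> real \<times> real) \<times> (real \<times> real \<times> real). fst (fst x) = 0 \<or> fst (snd (fst x)) = 0} \<in> null_sets lebesgue"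
    by (rule null_part)
  fix h h' :: "real \<times> real \<times> real"
  assume N: "(h, h') \<notin> {x. fst (fst x) = 0 \<or> fst (snd (fst x)) = 0}"
    and Y: "\<forall>t\<ge>0. yout h t = yout h' t"
  obtain ha hb h1 where h: "h = (ha, hb, h1)" by (cases h) auto
  obtain ha' hb' h1' where h': "h' = (ha', hb', h1')" by (cases h') auto
  have r: "ha = ha' \<and> hb^2 = hb'^2 \<and> h1^2 = h1'^2"
    by (rule ident) (use N Y h h' in auto)
  show "fst h = fst h'" using r h h' by simp
  show "(fst (snd h))\<^sup>2 = (fst (snd h'))\<^sup>2" using r h h' by simp
  show "(snd (snd h))\<^sup>2 = (snd (snd h'))\<^sup>2" using r h h' by simp
qed

end
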